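(* Let $N_e\ge2$, $L\ge1$ be integers, $\sigma_r>0$, $c_4\in\mathbb{C}\setminus\{0\}$, $d>0$. For $\phi\in(-\pi/2,\pi/2)$ let $$\mathbf{C}(\phi)=|c_4|^2L\,\mathbf{I}_L\otimes\big(d\,\mathbf{c}(\phi)\mathbf{c}(\phi)^H\big)+\sigma_r^2\mathbf{I}_{N_eL},$$ $F_{\phi\phi}=\mathrm{tr}\!\big(\mathbf{C}^{-1}\frac{\partial\mathbf{C}}{\partial\phi}\mathbf{C}^{-1}\frac{\partial\mathbf{C}}{\partial\phi}\big)$ and $\mathrm{CRB}(\phi)=1/F_{\phi\phi}$. Then $$\mathrm{CRB}(\phi)=\frac{6\sigma_r^2(\sigma_r^2+|c_4|^2LdN_e)}{|c_4|^4L^3d^2\pi^2\cos^2(\phi)N_e^2(N_e^2-1)}.$$ Moreover, if $\phi\sim\mathcal{U}(-\pi/2,\pi/2)$ then for $\epsilon>0$, with $u(\epsilon)=\sqrt6\,\sigma_r\big(\epsilon|c_4|^4L^3d^2\pi^2N_e^2(N_e^2-1)\big)^{-1/2}(\sigma_r^2+|c_4|^2LdN_e)^{1/2}$, we have $P(\mathrm{CRB}(\phi)>\epsilon)=\frac2\pi\sin^{-1}(u(\epsilon))$ if $u(\epsilon)<1$, and $=1$ otherwise.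
   Context: $j=\sqrt{-1}$. $\mathbf{c}(\phi)\in\mathbb{C}^{N_e}$ has $i$-th entry $e^{-j\pi\sin(\phi)\frac{N_e-(2i-1)}{2}}$. This models a weak sensing eavesdropper (not knowing the transmitted signal) under the SSJB scheme: its vectorized observation is zero-mean complex Gaussian with covariance $\mathbf{C}(\phi)$, where in the paper $d=P\tau|\alpha|^2N$ ($P>0$ transmit power, $\tau\in(0,1)$ data power fraction, $\alpha$ the coefficient of the data beam along the normalized target steering vector, $N$ the number of BS transmit antennas); $\mathrm{CRB}(\phi)$ is the inverse Fisher information for $\phi$. *)

theory Defs
  imports "HOL-Probability.Probability" "Jordan_Normal_Form.Gauss_Jordan_Elimination"
begin

definition steer :: "nat \<Rightarrow> real \<Rightarrow> complex vec" where
  "steer Ne phi = vec Ne (\<lambda>i. exp (- \<i> * complex_of_real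
      (pi * sin phi * (real Ne - (2 * real (i + 1) - 1)) / 2)))"

definition outer_H :: "complex vec \<Rightarrow> complex mat" where
  "outer_H x = mat (dim_vec x) (dim_vec x) (\<lambda>(i,j). x $ i * cnj (x $ j))"

definition kron_id :: "nat \<Rightarrow> complex mat \<Rightarrow> complex mat" where
  "kron_id L X = (let n = dim_row X in
     mat (L * n) (L * n) (\<lambda>(k,l). if k div n = l div n then X $$ (k mod n, l mod n) else 0))"

definition covC :: "nat \<Rightarrow> nat \<Rightarrow> real \<Rightarrow> complex \<Rightarrow> real \<Rightarrow> real \<Rightarrow> complex mat" where
  "covC Ne L sr c4 d phi =
     complex_of_real ((cmod c4)\<^sup>2 * real L) \<cdot>\<^sub>m
        kron_id L (complex_of_real d \<cdot>\<^sub>m outer_H (steer Ne phi))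
     + complex_of_real (sr\<^sup>2) \<cdot>\<^sub>m 1\<^sub>m (Ne * L)"

definition mtrace :: "complex mat \<Rightarrow> complex" where
  "mtrace A = (\<Sum>i<dim_row A. A $$ (i,i))"

definition dcovC :: "nat \<Rightarrow> nat \<Rightarrow> real \<Rightarrow> complex \<Rightarrow> real \<Rightarrow> real \<Rightarrow> complex mat" where
  "dcovC Ne L sr c4 d phi =
     mat (Ne * L) (Ne * L)
       (\<lambda>(i,j). vector_derivative (\<lambda>t. covC Ne L sr c4 d t $$ (i,j)) (at phi))"

definition fisher :: "nat \<Rightarrow> nat \<Rightarrow> real \<Rightarrow> complex \<Rightarrow> real \<Rightarrow> real \<Rightarrow> complex" where
  "fisher Ne L sr c4 d phi =
     (let Ci = the (mat_inverse (covC Ne L sr c4 d phi));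
          D = dcovC Ne L sr c4 d phi
      in mtrace (Ci * D * Ci * D))"

definition CRB :: "nat \<Rightarrow> nat \<Rightarrow> real \<Rightarrow> complex \<Rightarrow> real \<Rightarrow> real \<Rightarrow> complex" where
  "CRB Ne L sr c4 d phi = 1 / fisher Ne L sr c4 d phi"

end

theory Submission
  imports Defs "Jordan_Normal_Form.Determinant"
begin

definition blkm :: "nat \<Rightarrow> nat \<Rightarrow> (nat \<Rightarrow> nat \<Rightarrow> complex) \<Rightarrow> complex mat" where
  "blkm n L G = mat (L*n) (L*n) (\<lambda>(p,q). if p div n = q div n then G (p mod n) (q mod n) else 0)"

lemma blkm_carrier[simp]: "blkm n L G \<in> carrier_mat (L*n) (L*n)"
  and blkm_dims[simp]: "dim_row (blkm n L G) = L*n" "dim_col (blkm n L G) = L*n"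
  by (auto simp: blkm_def)

lemma blkm_index[simp]: "p < L*n \<Longrightarrow> q < L*n \<Longrightarrow> blkm n L G $$ (p,q) = (if p div n = q div n then G (p mod n) (q mod n) else 0)"
  by (simp add: blkm_def)

lemma sum_shift_aux: "sum (f::nat\<Rightarrow>complex) {m..<m+k} = (\<Sum>i<k. f (m+i))"
  by (induct k) (simp_all add: add.assoc)

lemma sum_split_blocks:
  fixes f :: "nat \<Rightarrow> complex"
  shows "(\<Sum>r<L*n. f r) = (\<Sum>b<L. \<Sum>i<n. f (b*n+i))"
proof -
  have "(\<Sum>r<L*n. f r) = (\<Sum>b<L. sum f {b*n..<b*n+n})"
    using sum.nat_group[of f n L] by simp
  also have "\<dots> = (\<Sum>b<L. \<Sum>i<n. f (b*n+i))"
  proof (rule sum.cong[OF refl])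
    fix b show "sum f {b*n..<b*n+n} = (\<Sum>i<n. f (b*n+i))"
      using sum_shift_aux[of f "b*n" n] by simp
  qed
  finally show ?thesis .
qed

lemma sum_block_select:
  fixes f :: "nat \<Rightarrow> nat \<Rightarrow> complex"
  assumes "b0 < L" "0 < n"
  shows "(\<Sum>r<L*n. if r div n = b0 then f r (r mod n) else 0) = (\<Sum>i<n. f (b0*n+i) i)"
proof -
  have "(\<Sum>r<L*n. if r div n = b0 then f r (r mod n) else 0)
     = (\<Sum>b<L. \<Sum>i<n. if (b*n+i) div n = b0 then f (b*n+i) ((b*n+i) mod n) else 0)"
    by (rule sum_split_blocks)
  also have "\<dots> = (\<Sum>b<L. if b = b0 then (\<Sum>i<n. f (b*n+i) i) else 0)"
    by (rule sum.cong[OF refl]) (use assms in auto)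
  also have "\<dots> = (\<Sum>i<n. f (b0*n+i) i)" using assms by simp
  finally show ?thesis .
qed

lemma blkm_mult:
  assumes "0 < n"
  shows "blkm n L G * blkm n L H = blkm n L (\<lambda>i j. \<Sum>l<n. G i l * H l j)"
proof (rule eq_matI)
  fix p q assume p: "p < dim_row (blkm n L (\<lambda>i j. \<Sum>l<n. G i l * H l j))"
    and q: "q < dim_col (blkm n L (\<lambda>i j. \<Sum>l<n. G i l * H l j))"
  then have p': "p < L*n" and q': "q < L*n" by auto
  have bp: "p div n < L" using p' assms by (simp add: less_mult_imp_div_less mult.commute)
  have "(blkm n L G * blkm n L H) $$ (p,q) = (\<Sum>r<L*n. blkm n L G $$ (p,r) * blkm n L H $$ (r,q))"
    using p' q' by (simp add: scalar_prod_def atLeast0LessThan)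
  also have "\<dots> = (\<Sum>r<L*n. if r div n = p div n then G (p mod n) (r mod n) * (if p div n = q div n then H (r mod n) (q mod n) else 0) else 0)"
    by (rule sum.cong[OF refl]) (use p' q' in auto)
  also have "\<dots> = (\<Sum>i<n. G (p mod n) i * (if p div n = q div n then H i (q mod n) else 0))"
    by (rule sum_block_select[OF bp assms])
  also have "\<dots> = blkm n L (\<lambda>i j. \<Sum>l<n. G i l * H l j) $$ (p,q)"
    using p' q' by auto
  finally show "(blkm n L G * blkm n L H) $$ (p,q) = blkm n L (\<lambda>i j. \<Sum>l<n. G i l * H l j) $$ (p,q)" .
qed auto

lemma blkm_cong: "0 < n \<Longrightarrow> (\<And>i j. i < n \<Longrightarrow> j < n \<Longrightarrow> G i j = H i j) \<Longrightarrow> blkm n L G = blkm n L H"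
  unfolding blkm_def by (rule eq_matI) auto

lemma blkm_one: "0 < n \<Longrightarrow> 1\<^sub>m (L*n) = blkm n L (\<lambda>i j. if i = j then 1 else 0)"
  apply (rule eq_matI) apply auto
  by (metis div_mult_mod_eq)

lemma mtrace_blkm: "0 < n \<Longrightarrow> mtrace (blkm n L G) = of_nat L * (\<Sum>i<n. G i i)"
proof -
  assume n: "0 < n"
  have "mtrace (blkm n L G) = (\<Sum>p<L*n. G (p mod n) (p mod n))"
    unfolding mtrace_def by simp
  also have "\<dots> = (\<Sum>b<L. \<Sum>i<n. G ((b*n+i) mod n) ((b*n+i) mod n))"
    by (rule sum_split_blocks)
  also have "\<dots> = (\<Sum>b<L. \<Sum>i<n. G i i)"
    by (rule sum.cong[OF refl], rule sum.cong[OF refl]) simp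
  finally show ?thesis by simp
qed

lemma sum_delta_l: "(i::nat) < n \<Longrightarrow> (\<Sum>l<n. (if i = l then X l else 0)) = (X i :: complex)"
  by (simp add: sum.delta)
lemma sum_delta_r: "(j::nat) < n \<Longrightarrow> (\<Sum>l<n. (if l = j then X l else 0)) = (X j :: complex)"
  by (simp add: sum.delta')

lemma inv_inner:
  fixes v :: "nat \<Rightarrow> complex" and k s g :: real
  assumes unit: "\<And>i. i < n \<Longrightarrow> v i * cnj (v i) = 1" and s: "s > 0"
    and g: "g = k / (s + k * real n)" and k: "k \<ge> 0" and i: "i < n" and j: "j < n"
  shows "(\<Sum>l<n. (of_real k * v i * cnj (v l) + (if i = l then of_real s else 0)) *
           ((if l = j then 1 else 0) / of_real s - of_real g / of_real s * v l * cnj (v j)))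
         = (if i = j then 1 else 0)"
proof -
  have sk: "s + k * real n > 0" using s k by (simp add: add_pos_nonneg)
  have "(\<Sum>l<n. (of_real k * v i * cnj (v l) + (if i = l then of_real s else 0)) *
           ((if l = j then 1 else 0) / of_real s - of_real g / of_real s * v l * cnj (v j)))
      = (\<Sum>l<n. (if l = j then of_real k * v i * cnj (v l) / of_real s else 0))
        - (\<Sum>l<n. of_real k * of_real g / of_real s * v i * cnj (v j) * (v l * cnj (v l)))
        + (\<Sum>l<n. (if i = l then (if l = j then 1 else 0) else 0))
        - (\<Sum>l<n. (if i = l then of_real g * v l * cnj (v j) else 0))"
    unfolding sum_subtractf[symmetric] sum.distrib[symmetric]
    by (rule sum.cong[OF refl]) (use s in \<open>auto simp: field_simps\<close>)
  also have "\<dots> = of_real k * v i * cnj (v j) / of_real s - of_real k * of_real g / of_real s * v i * cnj (v j) * of_nat n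
      + (if i = j then 1 else 0) - of_real g * v i * cnj (v j)"
    using i j unit by (simp add: sum_delta_l sum_delta_r)
  also have "\<dots> = (if i = j then 1 else 0) + v i * cnj (v j) * of_real (k / s - k * g / s * real n - g)"
    by (simp add: algebra_simps)
  also have "k / s - k * g / s * real n - g = (k - g * (s + k * real n)) / s"
    using s by (simp add: field_simps)
  also have "g * (s + k * real n) = k" using sk unfolding g by simp
  finally show ?thesis by simp
qed

lemma X_inner:
  fixes v :: "nat \<Rightarrow> complex" and r :: "nat \<Rightarrow> real" and k s g :: real
  assumes unit: "\<And>i. i < n \<Longrightarrow> v i * cnj (v i) = 1" and s: "s > 0"
    and sr: "(\<Sum>l<n. r l) = 0" and i: "i < n" and j: "j < n"
  shows "(\<Sum>l<n. ((if i = l then 1 else 0) / of_real s - of_real g / of_real s * v i * cnj (v l)) *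
           (of_real k * \<i> * of_real (r l - r j) * v l * cnj (v j)))
         = of_real k * \<i> / of_real s * v i * cnj (v j) * of_real (r i - (1 - g * real n) * r j)"
proof -
  have "(\<Sum>l<n. ((if i = l then 1 else 0) / of_real s - of_real g / of_real s * v i * cnj (v l)) *
           (of_real k * \<i> * of_real (r l - r j) * v l * cnj (v j)))
      = (\<Sum>l<n. (if i = l then of_real k * \<i> * of_real (r l - r j) * v l * cnj (v j) / of_real s else 0))
        - (\<Sum>l<n. of_real g / of_real s * of_real k * \<i> * v i * cnj (v j) * of_real (r l - r j) * (v l * cnj (v l)))"
    unfolding sum_subtractf[symmetric]
    by (rule sum.cong[OF refl]) (use s in \<open>auto simp: field_simps\<close>)
  also have "\<dots> = of_real k * \<i> * of_real (r i - r j) * v i * cnj (v j) / of_real s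
        - of_real g / of_real s * of_real k * \<i> * v i * cnj (v j) * of_real (\<Sum>l<n. (r l - r j))"
    using i unit by (simp add: sum_delta_l sum_distrib_left sum_divide_distrib)
  also have "(\<Sum>l<n. (r l - r j)) = - real n * r j"
    using sr by (simp add: sum_subtractf)
  finally show ?thesis using s by (simp add: field_simps)
qed


lemma trace_inner:
  fixes v :: "nat \<Rightarrow> complex" and r :: "nat \<Rightarrow> real" and K :: complex and \<beta> :: real
  assumes unit: "\<And>i. i < n \<Longrightarrow> v i * cnj (v i) = 1"
    and sr: "(\<Sum>l<n. r l) = 0"
  shows "(\<Sum>i<n. \<Sum>l<n. (K * v i * cnj (v l) * of_real (r i - \<beta> * r l)) *
                          (K * v l * cnj (v i) * of_real (r l - \<beta> * r i)))
       = - 2 * K\<^sup>2 * of_real (\<beta> * real n * (\<Sum>l<n. (r l)\<^sup>2))"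
proof -
  have pt: "(K * v i * cnj (v l) * of_real (r i - \<beta> * r l)) *
                          (K * v l * cnj (v i) * of_real (r l - \<beta> * r i))
       = K\<^sup>2 * of_real ((r i - \<beta> * r l) * (r l - \<beta> * r i))" if "i < n" "l < n" for i l
  proof -
    have "(K * v i * cnj (v l) * of_real (r i - \<beta> * r l)) *
                          (K * v l * cnj (v i) * of_real (r l - \<beta> * r i))
       = K\<^sup>2 * (v i * cnj (v i)) * (v l * cnj (v l)) * of_real ((r i - \<beta> * r l) * (r l - \<beta> * r i))"
      by (simp add: power2_eq_square mult_ac)
    then show ?thesis using unit that by simp
  qed
  define Q where "Q = (\<Sum>l<n. (r l)\<^sup>2)"
  have inner: "(\<Sum>l<n. (r i - \<beta> * r l) * (r l - \<beta> * r i)) = - real n * \<beta> * (r i)\<^sup>2 - \<beta> * Q" for i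
  proof -
    have "(\<Sum>l<n. (r i - \<beta> * r l) * (r l - \<beta> * r i))
        = (\<Sum>l<n. (1 + \<beta>\<^sup>2) * r i * r l - (\<beta> * (r i)\<^sup>2 + \<beta> * (r l)\<^sup>2))"
      by (rule sum.cong[OF refl]) (simp add: algebra_simps power2_eq_square)
    also have "\<dots> = (1 + \<beta>\<^sup>2) * r i * (\<Sum>l<n. r l) - (\<Sum>l<n. \<beta> * (r i)\<^sup>2 + \<beta> * (r l)\<^sup>2)"
      by (simp only: sum_subtractf sum_distrib_left)
    also have "(\<Sum>l<n. \<beta> * (r i)\<^sup>2 + \<beta> * (r l)\<^sup>2) = real n * \<beta> * (r i)\<^sup>2 + \<beta> * Q"
      unfolding Q_def by (simp add: sum.distrib sum_distrib_left)
    finally show ?thesis using sr by simp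
  qed
  have outer: "(\<Sum>i<n. \<Sum>l<n. (r i - \<beta> * r l) * (r l - \<beta> * r i)) = - 2 * \<beta> * real n * Q"
  proof -
    have "(\<Sum>i<n. \<Sum>l<n. (r i - \<beta> * r l) * (r l - \<beta> * r i)) = (\<Sum>i<n. - real n * \<beta> * (r i)\<^sup>2 - \<beta> * Q)"
      using inner by simp
    also have "\<dots> = - real n * \<beta> * Q - real n * \<beta> * Q"
      unfolding Q_def by (simp add: sum_subtractf sum_distrib_left mult.assoc)
    finally show ?thesis by simp
  qed
  have "(\<Sum>i<n. \<Sum>l<n. (K * v i * cnj (v l) * of_real (r i - \<beta> * r l)) *
                          (K * v l * cnj (v i) * of_real (r l - \<beta> * r i)))
      = (\<Sum>i<n. \<Sum>l<n. K\<^sup>2 * of_real ((r i - \<beta> * r l) * (r l - \<beta> * r i)))"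
    by (rule sum.cong[OF refl], rule sum.cong[OF refl], rule pt) auto
  also have "\<dots> = K\<^sup>2 * of_real (\<Sum>i<n. \<Sum>l<n. (r i - \<beta> * r l) * (r l - \<beta> * r i))"
    by (simp only: sum_distrib_left of_real_sum)
  also have "\<dots> = - 2 * K\<^sup>2 * of_real (\<beta> * real n * Q)"
    unfolding outer by simp
  finally show ?thesis unfolding Q_def .
qed


lemma sum_nat_real: "(\<Sum>i<n. real i) = real n * (real n - 1) / 2"
  by (induct n) (simp_all add: field_simps)
lemma sum_nat_sq_real: "(\<Sum>i<n. (real i)\<^sup>2) = real n * (real n - 1) * (2 * real n - 1) / 6"
  by (induct n) (simp_all add: field_simps power2_eq_square)

definition mm :: "nat \<Rightarrow> nat \<Rightarrow> real" where
  "mm n i = real n - (2 * real (i + 1) - 1)"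

lemma sum_mm: "(\<Sum>i<n. mm n i) = 0"
proof -
  have "(\<Sum>i<n. mm n i) = (\<Sum>i<n. (real n - 1) - 2 * real i)"
    unfolding mm_def by (rule sum.cong) auto
  also have "\<dots> = real n * (real n - 1) - 2 * (\<Sum>i<n. real i)"
    by (simp add: sum_subtractf sum_distrib_left)
  finally show ?thesis by (simp add: sum_nat_real)
qed

lemma sum_mm_sq: "(\<Sum>i<n. (mm n i)\<^sup>2) = real n * ((real n)\<^sup>2 - 1) / 3"
proof -
  have "(\<Sum>i<n. (mm n i)\<^sup>2) = (\<Sum>i<n. (real n - 1)\<^sup>2 - 4 * (real n - 1) * real i + 4 * (real i)\<^sup>2)"
    unfolding mm_def by (rule sum.cong) (auto simp: power2_eq_square algebra_simps)
  also have "\<dots> = real n * (real n - 1)\<^sup>2 - 4 * (real n - 1) * (\<Sum>i<n. real i) + 4 * (\<Sum>i<n. (real i)\<^sup>2)"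
    by (simp add: sum.distrib sum_subtractf sum_distrib_left)
  also have "\<dots> = real n * ((real n)\<^sup>2 - 1) / 3"
    unfolding sum_nat_real sum_nat_sq_real by (simp add: field_simps power2_eq_square)
  finally show ?thesis .
qed

definition vv :: "nat \<Rightarrow> real \<Rightarrow> nat \<Rightarrow> complex" where
  "vv n t i = exp (- \<i> * complex_of_real (pi * sin t * mm n i / 2))"

lemma steer_index: "i < n \<Longrightarrow> steer n t $ i = vv n t i"
  by (simp add: steer_def vv_def mm_def)

lemma dim_steer[simp]: "dim_vec (steer n t) = n"
  by (simp add: steer_def)

lemma cnj_exp_i: "cnj (exp (- \<i> * complex_of_real x)) = exp (\<i> * complex_of_real x)"
  by (simp add: exp_cnj)

lemma vv_prod: "vv n t i * cnj (vv n t j) = exp (- \<i> * complex_of_real (pi * sin t * (mm n i - mm n j) / 2))"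
  unfolding vv_def cnj_exp_i exp_add[symmetric]
  by (simp add: algebra_simps diff_divide_distrib)

lemma vv_unit: "vv n t i * cnj (vv n t i) = 1"
  unfolding vv_prod by simp


lemma covC_blkm:
  assumes n: "0 < Ne"
  shows "covC Ne L sr c4 d t = blkm Ne L (\<lambda>i j. of_real ((cmod c4)\<^sup>2 * real L * d) * vv Ne t i * cnj (vv Ne t j)
            + (if i = j then of_real (sr\<^sup>2) else 0))"
proof (rule eq_matI)
  fix p q assume p: "p < dim_row (blkm Ne L (\<lambda>i j. of_real ((cmod c4)\<^sup>2 * real L * d) * vv Ne t i * cnj (vv Ne t j)
            + (if i = j then of_real (sr\<^sup>2) else 0)))"
    and q: "q < dim_col (blkm Ne L (\<lambda>i j. of_real ((cmod c4)\<^sup>2 * real L * d) * vv Ne t i * cnj (vv Ne t j)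
            + (if i = j then of_real (sr\<^sup>2) else 0)))"
  then have p': "p < L*Ne" and q': "q < L*Ne" by auto
  have pq: "(p = q) = (p div Ne = q div Ne \<and> p mod Ne = q mod Ne)"
    by (metis div_mult_mod_eq)
  show "covC Ne L sr c4 d t $$ (p, q) = blkm Ne L (\<lambda>i j. of_real ((cmod c4)\<^sup>2 * real L * d) * vv Ne t i * cnj (vv Ne t j)
            + (if i = j then of_real (sr\<^sup>2) else 0)) $$ (p, q)"
    using p' q' n unfolding covC_def kron_id_def outer_H_def Let_def
    by (auto simp: mult.commute[of Ne L] steer_index pq)
qed (auto simp: covC_def kron_id_def outer_H_def Let_def mult.commute[of Ne L])


lemma deriv_entry:
  fixes k D phi :: real and c :: complex
  shows "vector_derivative (\<lambda>t. of_real k * exp (- \<i> * complex_of_real (pi * sin t * D / 2)) + c) (at phi)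
       = of_real k * \<i> * of_real (- (pi * cos phi * D / 2)) * exp (- \<i> * complex_of_real (pi * sin phi * D / 2))"
proof -
  define h where "h z = of_real k * exp (- \<i> * (of_real pi * sin z * of_real D / 2)) + c" for z :: complex
  have eq: "(\<lambda>t. of_real k * exp (- \<i> * complex_of_real (pi * sin t * D / 2)) + c) = (\<lambda>t. h (of_real t))"
    by (rule ext) (simp add: h_def sin_of_real)
  have "(h has_field_derivative (of_real k * exp (- \<i> * (of_real pi * sin (of_real phi) * of_real D / 2))
          * (- \<i> * (of_real pi * cos (of_real phi) * of_real D / 2)))) (at (of_real phi))"
    unfolding h_def by (rule derivative_eq_intros refl | simp)+
  then have "((\<lambda>t. h (of_real t)) has_vector_derivative (of_real k * exp (- \<i> * (of_real pi * sin (of_real phi) * of_real D / 2))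
          * (- \<i> * (of_real pi * cos (of_real phi) * of_real D / 2)))) (at phi)"
    by (rule has_vector_derivative_real_field)
  then show ?thesis unfolding eq
    by (subst vector_derivative_at) (auto simp: sin_of_real cos_of_real algebra_simps)
qed


lemma dcovC_blkm:
  assumes n: "0 < Ne"
  shows "dcovC Ne L sr c4 d phi = blkm Ne L (\<lambda>i j. of_real ((cmod c4)\<^sup>2 * real L * d) * \<i> *
            of_real ((- (pi * cos phi * mm Ne i / 2)) - (- (pi * cos phi * mm Ne j / 2))) * vv Ne phi i * cnj (vv Ne phi j))"
proof (rule eq_matI)
  let ?k = "(cmod c4)\<^sup>2 * real L * d"
  fix p q assume "p < dim_row (blkm Ne L (\<lambda>i j. of_real ((cmod c4)\<^sup>2 * real L * d) * \<i> *
            of_real ((- (pi * cos phi * mm Ne i / 2)) - (- (pi * cos phi * mm Ne j / 2))) * vv Ne phi i * cnj (vv Ne phi j)))"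
    "q < dim_col (blkm Ne L (\<lambda>i j. of_real ((cmod c4)\<^sup>2 * real L * d) * \<i> *
            of_real ((- (pi * cos phi * mm Ne i / 2)) - (- (pi * cos phi * mm Ne j / 2))) * vv Ne phi i * cnj (vv Ne phi j)))"
  then have p: "p < L*Ne" and q: "q < L*Ne" by auto
  have ent: "(\<lambda>t. covC Ne L sr c4 d t $$ (p,q)) = (\<lambda>t. if p div Ne = q div Ne then
      of_real ?k * exp (- \<i> * complex_of_real (pi * sin t * (mm Ne (p mod Ne) - mm Ne (q mod Ne)) / 2))
      + (if p mod Ne = q mod Ne then of_real (sr\<^sup>2) else 0) else 0)"
    by (rule ext) (simp add: covC_blkm[OF n] p q vv_prod mult.assoc)
  show "dcovC Ne L sr c4 d phi $$ (p, q) = blkm Ne L (\<lambda>i j. of_real ((cmod c4)\<^sup>2 * real L * d) * \<i> *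
            of_real ((- (pi * cos phi * mm Ne i / 2)) - (- (pi * cos phi * mm Ne j / 2))) * vv Ne phi i * cnj (vv Ne phi j)) $$ (p, q)"
  proof (cases "p div Ne = q div Ne")
    case True
    have "dcovC Ne L sr c4 d phi $$ (p, q) = vector_derivative (\<lambda>t. covC Ne L sr c4 d t $$ (p,q)) (at phi)"
      using p q by (simp add: dcovC_def mult.commute[of Ne L])
    also have "\<dots> = of_real ?k * \<i> * of_real (- (pi * cos phi * (mm Ne (p mod Ne) - mm Ne (q mod Ne)) / 2))
       * exp (- \<i> * complex_of_real (pi * sin phi * (mm Ne (p mod Ne) - mm Ne (q mod Ne)) / 2))"
      unfolding ent True by (simp only: refl if_True deriv_entry)
    also have "\<dots> = blkm Ne L (\<lambda>i j. of_real ((cmod c4)\<^sup>2 * real L * d) * \<i> *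
            of_real ((- (pi * cos phi * mm Ne i / 2)) - (- (pi * cos phi * mm Ne j / 2))) * vv Ne phi i * cnj (vv Ne phi j)) $$ (p, q)"
    proof -
      have e: "(- (pi * cos phi * mm Ne (p mod Ne) / 2)) - (- (pi * cos phi * mm Ne (q mod Ne) / 2))
          = - (pi * cos phi * (mm Ne (p mod Ne) - mm Ne (q mod Ne)) / 2)" by (simp add: algebra_simps diff_divide_distrib)
      show ?thesis using p q True by (simp only: blkm_index refl if_True e) (simp only: mult.assoc vv_prod)
    qed
    finally show ?thesis .
  next
    case False
    have "dcovC Ne L sr c4 d phi $$ (p, q) = vector_derivative (\<lambda>t. covC Ne L sr c4 d t $$ (p,q)) (at phi)"
      using p q by (simp add: dcovC_def mult.commute[of Ne L])
    also have "\<dots> = 0" unfolding ent using False by simp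
    finally show ?thesis using p q False by simp
  qed
qed (auto simp: dcovC_def mult.commute[of Ne L])


lemma the_mat_inverse:
  fixes A B :: "'a :: field mat"
  assumes A: "A \<in> carrier_mat n n" and B: "B \<in> carrier_mat n n" and AB: "A * B = 1\<^sub>m n"
  shows "the (mat_inverse A) = B"
proof -
  have BA: "B * A = 1\<^sub>m n" by (rule mat_mult_left_right_inverse[OF A B AB])
  show ?thesis
  proof (cases "mat_inverse A")
    case None
    from mat_inverse(1)[OF A None, of undefined] have "A \<notin> Units (ring_mat TYPE('a) n undefined)" .
    moreover have "A \<in> Units (ring_mat TYPE('a) n undefined)"
      using A B AB BA unfolding Units_def ring_mat_def by auto
    ultimately show ?thesis by blast
  next
    case (Some B')
    from mat_inverse(2)[OF A Some] have B': "A * B' = 1\<^sub>m n" "B' * A = 1\<^sub>m n" "B' \<in> carrier_mat n n" by auto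
    have "B' = B' * (A * B)" using B' AB by simp
    also have "\<dots> = (B' * A) * B" by (rule assoc_mult_mat[symmetric]) (use A B B' in auto)
    also have "\<dots> = B" using B' B by simp
    finally show ?thesis using Some by simp
  qed
qed


lemma fisher_val:
  assumes n: "0 < Ne" and sr: "sr > 0" and d: "d > 0"
    and kdef: "k = (cmod c4)\<^sup>2 * real L * d" and sdef: "s = sr\<^sup>2"
    and gdef: "g = k / (s + k * real Ne)"
    and rdef: "rr = (\<lambda>i. - (pi * cos phi * mm Ne i / 2))"
  shows "fisher Ne L sr c4 d phi = of_real (2 * real L * k\<^sup>2 * (1 - g * real Ne) * real Ne * (\<Sum>l<Ne. (rr l)\<^sup>2) / s\<^sup>2)"
proof -
  define v where "v = vv Ne phi"
  have unit: "\<And>i. i < Ne \<Longrightarrow> v i * cnj (v i) = 1" unfolding v_def by (rule vv_unit)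
  have s: "s > 0" using sr sdef by simp
  have k: "k \<ge> 0" using kdef d by simp
  have sumr: "(\<Sum>l<Ne. rr l) = 0"
  proof -
    have "(\<Sum>l<Ne. rr l) = - (pi * cos phi / 2) * (\<Sum>l<Ne. mm Ne l)"
      unfolding rdef by (simp add: sum_distrib_left sum_negf)
    then show ?thesis by (simp add: sum_mm)
  qed
  have C: "covC Ne L sr c4 d phi = blkm Ne L (\<lambda>i j. of_real k * v i * cnj (v j) + (if i = j then of_real s else 0))"
    unfolding kdef sdef v_def by (rule covC_blkm[OF n])
  define CiM where "CiM = blkm Ne L (\<lambda>i j. (if i = j then 1 else 0) / of_real s - of_real g / of_real s * v i * cnj (v j))"
  have "covC Ne L sr c4 d phi * CiM = blkm Ne L (\<lambda>i j. (if i = j then 1 else 0))"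
    unfolding C CiM_def blkm_mult[OF n]
    by (rule blkm_cong[OF n], rule inv_inner[OF unit s gdef k]) auto
  also have "\<dots> = 1\<^sub>m (L*Ne)" by (rule blkm_one[OF n, symmetric])
  finally have CCi: "covC Ne L sr c4 d phi * CiM = 1\<^sub>m (L*Ne)" .
  have inv: "the (mat_inverse (covC Ne L sr c4 d phi)) = CiM"
    by (rule the_mat_inverse[OF _ _ CCi]) (auto simp: C CiM_def)
  have D: "dcovC Ne L sr c4 d phi = blkm Ne L (\<lambda>i j. of_real k * \<i> * of_real (rr i - rr j) * v i * cnj (v j))"
    unfolding kdef rdef v_def by (rule dcovC_blkm[OF n])
  define K where "K = of_real k * \<i> / (of_real s :: complex)"
  define \<beta> where "\<beta> = 1 - g * real Ne"
  have X: "CiM * dcovC Ne L sr c4 d phi = blkm Ne L (\<lambda>i j. K * v i * cnj (v j) * of_real (rr i - \<beta> * rr j))"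
    unfolding CiM_def D blkm_mult[OF n] K_def \<beta>_def
    by (rule blkm_cong[OF n], rule X_inner[OF unit s sumr]) auto
  have "fisher Ne L sr c4 d phi = mtrace (CiM * dcovC Ne L sr c4 d phi * CiM * dcovC Ne L sr c4 d phi)"
    unfolding fisher_def Let_def inv ..
  also have "CiM * dcovC Ne L sr c4 d phi * CiM * dcovC Ne L sr c4 d phi
      = (CiM * dcovC Ne L sr c4 d phi) * (CiM * dcovC Ne L sr c4 d phi)"
    by (rule assoc_mult_mat[of _ "L*Ne" "L*Ne" _ "L*Ne"]) (auto simp: CiM_def D)
  also have "\<dots> = blkm Ne L (\<lambda>i j. \<Sum>l<Ne. (K * v i * cnj (v l) * of_real (rr i - \<beta> * rr l)) *
                          (K * v l * cnj (v j) * of_real (rr l - \<beta> * rr j)))"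
    unfolding X blkm_mult[OF n] ..
  also have "mtrace \<dots> = of_nat L * (- 2 * K\<^sup>2 * of_real (\<beta> * real Ne * (\<Sum>l<Ne. (rr l)\<^sup>2)))"
    unfolding mtrace_blkm[OF n] by (subst trace_inner[OF unit sumr]) auto
  also have "\<dots> = of_real (2 * real L * k\<^sup>2 * (1 - g * real Ne) * real Ne * (\<Sum>l<Ne. (rr l)\<^sup>2) / s\<^sup>2)"
    unfolding K_def \<beta>_def using s by (simp add: power2_eq_square field_simps)
  finally show ?thesis .
qed


lemma CRB_val:
  fixes Ne L :: nat and sr d :: real and c4 :: complex
  assumes "Ne \<ge> 2" and "L \<ge> 1" and "sr > 0" and "c4 \<noteq> 0" and "d > 0"
    and phi: "phi \<in> {-pi/2<..<pi/2}"
  shows "CRB Ne L sr c4 d phi =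
             complex_of_real ((6 * sr\<^sup>2 * (sr\<^sup>2 + (cmod c4)\<^sup>2 * real L * d * real Ne)) /
               ((cmod c4)^4 * real L ^ 3 * d\<^sup>2 * pi\<^sup>2 * (cos phi)\<^sup>2 * (real Ne)\<^sup>2 * ((real Ne)\<^sup>2 - 1)))"
proof -
  define k where "k = (cmod c4)\<^sup>2 * real L * d"
  define s where "s = sr\<^sup>2"
  define g where "g = k / (s + k * real Ne)"
  define rr where "rr = (\<lambda>i. - (pi * cos phi * mm Ne i / 2))"
  have n: "0 < Ne" using assms by simp
  have F: "fisher Ne L sr c4 d phi = of_real (2 * real L * k\<^sup>2 * (1 - g * real Ne) * real Ne * (\<Sum>l<Ne. (rr l)\<^sup>2) / s\<^sup>2)"
    by (rule fisher_val[OF n assms(3) assms(5) k_def s_def g_def rr_def])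
  have Q: "(\<Sum>l<Ne. (rr l)\<^sup>2) = (pi * cos phi / 2)\<^sup>2 * (real Ne * ((real Ne)\<^sup>2 - 1) / 3)"
    unfolding rr_def sum_mm_sq[symmetric] by (simp add: sum_distrib_left power2_eq_square algebra_simps)
  have cpos: "cos phi > 0" using phi by (auto intro!: cos_gt_zero_pi)
  have kpos: "k > 0" unfolding k_def using assms by simp
  have spos: "s > 0" unfolding s_def using assms by simp
  have skpos: "s + k * real Ne > 0" using kpos spos by (simp add: add_pos_nonneg)
  have beta: "1 - g * real Ne = s / (s + k * real Ne)" unfolding g_def using skpos by (simp add: field_simps)
  have N2: "real Ne \<ge> 2" using assms(1) by simp
  have N1: "(real Ne)\<^sup>2 - 1 > 0"
  proof -
    have "2 * 2 \<le> real Ne * real Ne" using N2 by (intro mult_mono) auto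
    then show ?thesis by (simp add: power2_eq_square)
  qed
  have Npos: "real Ne > 0" using N2 by simp
  have "CRB Ne L sr c4 d phi = 1 / fisher Ne L sr c4 d phi" unfolding CRB_def ..
  also have "\<dots> = of_real (1 / (2 * real L * k\<^sup>2 * (1 - g * real Ne) * real Ne * (\<Sum>l<Ne. (rr l)\<^sup>2) / s\<^sup>2))"
    unfolding F by simp
  also have "2 * real L * k\<^sup>2 * (1 - g * real Ne) * real Ne * (\<Sum>l<Ne. (rr l)\<^sup>2) / s\<^sup>2
      = (real L * k\<^sup>2 * (real Ne)\<^sup>2 * pi\<^sup>2 * (cos phi)\<^sup>2 * ((real Ne)\<^sup>2 - 1)) / (6 * s * (s + k * real Ne))"
  proof -
    define S where "S = s + k * real Ne"
    have Sp: "S > 0" using skpos S_def by simp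
    have "2 * real L * k\<^sup>2 * (s / S) * real Ne * ((pi * cos phi / 2)\<^sup>2 * (real Ne * ((real Ne)\<^sup>2 - 1) / 3)) / s\<^sup>2
      = (real L * k\<^sup>2 * (real Ne)\<^sup>2 * pi\<^sup>2 * (cos phi)\<^sup>2 * ((real Ne)\<^sup>2 - 1)) / (6 * s * S)"
      using Sp spos by (simp add: field_simps power2_eq_square)
    then show ?thesis unfolding beta Q S_def .
  qed
  also have "1 / \<dots> = (6 * s * (s + k * real Ne)) / (real L * k\<^sup>2 * (real Ne)\<^sup>2 * pi\<^sup>2 * (cos phi)\<^sup>2 * ((real Ne)\<^sup>2 - 1))"
    by simp
  also have "\<dots> = (6 * sr\<^sup>2 * (sr\<^sup>2 + (cmod c4)\<^sup>2 * real L * d * real Ne)) /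
               ((cmod c4)^4 * real L ^ 3 * d\<^sup>2 * pi\<^sup>2 * (cos phi)\<^sup>2 * (real Ne)\<^sup>2 * ((real Ne)\<^sup>2 - 1))"
  proof -
    have "real L * k\<^sup>2 = (cmod c4)^4 * real L ^ 3 * d\<^sup>2" unfolding k_def
      by (simp add: power2_eq_square power3_eq_cube power4_eq_xxxx)
    then show ?thesis unfolding s_def k_def by (simp add: mult_ac)
  qed
  finally show ?thesis .
qed


lemma prob_part:
  fixes f :: "real \<Rightarrow> complex" and A \<epsilon> u :: real
  assumes f: "\<And>phi. phi \<in> {-pi/2<..<pi/2} \<Longrightarrow> f phi = of_real (A / (cos phi)\<^sup>2)"
    and A: "A > 0" and eps: "\<epsilon> > 0" and u: "u = sqrt (A / \<epsilon>)"
  shows "measure (uniform_measure lborel {-pi/2<..<pi/2}) {phi \<in> {-pi/2<..<pi/2}. Re (f phi) > \<epsilon>}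
       = (if u < 1 then 2 / pi * arcsin u else 1)"
proof -
  let ?I = "{-pi/2<..<pi/2} :: real set"
  have upos: "u > 0" using u A eps by simp
  have cpos: "cos phi > 0" if "phi \<in> ?I" for phi using that by (auto intro!: cos_gt_zero_pi)
  have S: "{phi \<in> ?I. Re (f phi) > \<epsilon>} = {phi \<in> ?I. cos phi < u}"
  proof (intro Collect_cong conj_cong refl)
    fix phi assume ph: "phi \<in> ?I"
    have c: "cos phi > 0" by (rule cpos[OF ph])
    have "(Re (f phi) > \<epsilon>) = (\<epsilon> < A / (cos phi)\<^sup>2)" using f[OF ph] by simp
    also have "\<dots> = ((cos phi)\<^sup>2 < A / \<epsilon>)" using c eps A by (simp add: field_simps)
    also have "\<dots> = (sqrt ((cos phi)\<^sup>2) < sqrt (A / \<epsilon>))" by (rule real_sqrt_less_iff[symmetric])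
    also have "\<dots> = (cos phi < u)" using c u by simp
    finally show "(Re (f phi) > \<epsilon>) = (cos phi < u)" .
  qed
  have mI: "measure lborel ?I = pi" by simp
  have uni: "measure (uniform_measure lborel ?I) B = measure lborel (?I \<inter> B) / pi" if "B \<in> sets lborel" for B
    using that by (subst measure_uniform_measure) auto
  show ?thesis
  proof (cases "u \<le> 1")
    case True
    define a where "a = arccos u"
    have a0: "0 \<le> a" "a \<le> pi" unfolding a_def using True upos by (auto intro: arccos_lbound arccos_ubound)
    have ca: "cos a = u" unfolding a_def using True upos by simp
    have a2: "a < pi/2"
    proof -
      have "cos (pi/2) < cos a" using ca upos by simp
      then show ?thesis using a0 by (subst (asm) cos_mono_less_eq) auto
    qed
    have Seq1: "phi \<in> {-pi/2<..<-a} \<union> {a<..<pi/2}" if "phi \<in> ?I" "cos phi < u" for phi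
    proof -
      have ph: "phi \<in> ?I" and lt: "cos \<bar>phi\<bar> < cos a" using ca that by auto
      have "a < \<bar>phi\<bar>" using lt a0 ph by (subst (asm) cos_mono_less_eq) auto
      then show ?thesis using ph by auto
    qed
    have Seq2: "phi \<in> ?I \<and> cos phi < u" if h: "phi \<in> {-pi/2<..<-a} \<union> {a<..<pi/2}" for phi
    proof -
      have ph: "phi \<in> ?I" using h a0 by auto
      have "a < \<bar>phi\<bar>" using h a0 by auto
      then have "cos \<bar>phi\<bar> < cos a" using a0 ph by (subst cos_mono_less_eq) auto
      then show ?thesis using ph ca by simp
    qed
    have Seq: "{phi \<in> ?I. cos phi < u} = {-pi/2<..<-a} \<union> {a<..<pi/2}"
      using Seq1 Seq2 by blast
    have sub: "{-pi/2<..<-a} \<union> {a<..<pi/2} \<subseteq> ?I" using a0 by auto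
    have "measure lborel ({-pi/2<..<-a} \<union> {a<..<pi/2}) = (-a - -pi/2) + (pi/2 - a)"
      using a0 a2 by (subst measure_Union) auto
    then have m: "measure lborel (?I \<inter> ({-pi/2<..<-a} \<union> {a<..<pi/2})) = pi - 2 * a"
      using sub by (simp add: Int_absorb1)
    have val: "measure (uniform_measure lborel ?I) {phi \<in> ?I. Re (f phi) > \<epsilon>} = 2 / pi * arcsin u"
    proof -
      have "measure (uniform_measure lborel ?I) {phi \<in> ?I. Re (f phi) > \<epsilon>}
          = measure lborel (?I \<inter> ({-pi/2<..<-a} \<union> {a<..<pi/2})) / pi"
        unfolding S Seq by (rule uni) simp
      also have "\<dots> = (pi - 2 * a) / pi" unfolding m ..
      also have "\<dots> = 2 / pi * arcsin u"
        using arcsin_arccos_eq[of u] True upos unfolding a_def by (simp add: field_simps)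
      finally show ?thesis .
    qed
    show ?thesis
    proof (cases "u < 1")
      case True then show ?thesis using val by simp
    next
      case False
      then have "u = 1" using \<open>u \<le> 1\<close> by simp
      then show ?thesis using val by simp
    qed
  next
    case False
    have "{phi \<in> ?I. cos phi < u} = ?I" using False by (auto intro: le_less_trans[OF cos_le_one])
    then show ?thesis using False S uni[of ?I] by simp
  qed
qed


theorem lemma6:
  fixes Ne L :: nat and sr d :: real and c4 :: complex
  assumes "Ne \<ge> 2" and "L \<ge> 1" and "sr > 0" and "c4 \<noteq> 0" and "d > 0"
  shows "(\<forall>phi \<in> {-pi/2<..<pi/2}.
           CRB Ne L sr c4 d phi =
             complex_of_real ((6 * sr\<^sup>2 * (sr\<^sup>2 + (cmod c4)\<^sup>2 * real L * d * real Ne)) /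
               ((cmod c4)^4 * real L ^ 3 * d\<^sup>2 * pi\<^sup>2 * (cos phi)\<^sup>2 * (real Ne)\<^sup>2 * ((real Ne)\<^sup>2 - 1)))) \<and>
         (\<forall>\<epsilon>>0. (let u = sqrt 6 * sr
                  * (\<epsilon> * (cmod c4)^4 * real L ^ 3 * d\<^sup>2 * pi\<^sup>2 * (real Ne)\<^sup>2 * ((real Ne)\<^sup>2 - 1)) powr (-1/2)
                  * (sr\<^sup>2 + (cmod c4)\<^sup>2 * real L * d * real Ne) powr (1/2)
              in measure (uniform_measure lborel {-pi/2<..<pi/2})
                   {phi \<in> {-pi/2<..<pi/2}. Re (CRB Ne L sr c4 d phi) > \<epsilon>}
                 = (if u < 1 then 2 / pi * arcsin u else 1)))"
proof -
  have P1: "\<forall>phi \<in> {-pi/2<..<pi/2}.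
           CRB Ne L sr c4 d phi =
             complex_of_real ((6 * sr\<^sup>2 * (sr\<^sup>2 + (cmod c4)\<^sup>2 * real L * d * real Ne)) /
               ((cmod c4)^4 * real L ^ 3 * d\<^sup>2 * pi\<^sup>2 * (cos phi)\<^sup>2 * (real Ne)\<^sup>2 * ((real Ne)\<^sup>2 - 1)))"
    using CRB_val[OF assms] by blast
  define B where "B = sr\<^sup>2 + (cmod c4)\<^sup>2 * real L * d * real Ne"
  define P where "P = (cmod c4)^4 * real L ^ 3 * d\<^sup>2 * pi\<^sup>2"
  define Q where "Q = (real Ne)\<^sup>2 * ((real Ne)\<^sup>2 - 1)"
  define A where "A = 6 * sr\<^sup>2 * B / (P * Q)"
  have N2: "real Ne \<ge> 2" using assms(1) by simp
  have N1: "(real Ne)\<^sup>2 - 1 > 0"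
  proof -
    have "2 * 2 \<le> real Ne * real Ne" using N2 by (intro mult_mono) auto
    then show ?thesis by (simp add: power2_eq_square)
  qed
  have Bp: "B > 0" unfolding B_def using assms by (simp add: add_pos_nonneg)
  have Pp: "P > 0" unfolding P_def using assms by simp
  have Qp: "Q > 0" unfolding Q_def using N1 N2 by simp
  have Ap: "A > 0" unfolding A_def using Bp Pp Qp assms by simp
  have P2: "\<forall>\<epsilon>>0. (let u = sqrt 6 * sr
                  * (\<epsilon> * (cmod c4)^4 * real L ^ 3 * d\<^sup>2 * pi\<^sup>2 * (real Ne)\<^sup>2 * ((real Ne)\<^sup>2 - 1)) powr (-1/2)
                  * (sr\<^sup>2 + (cmod c4)\<^sup>2 * real L * d * real Ne) powr (1/2)
              in measure (uniform_measure lborel {-pi/2<..<pi/2})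
                   {phi \<in> {-pi/2<..<pi/2}. Re (CRB Ne L sr c4 d phi) > \<epsilon>}
                 = (if u < 1 then 2 / pi * arcsin u else 1))"
  proof (intro allI impI)
    fix \<epsilon> :: real assume eps: "\<epsilon> > 0"
    have X: "\<epsilon> * (cmod c4)^4 * real L ^ 3 * d\<^sup>2 * pi\<^sup>2 * (real Ne)\<^sup>2 * ((real Ne)\<^sup>2 - 1) = \<epsilon> * (P * Q)"
      unfolding P_def Q_def by (simp add: mult_ac)
    have Xp: "\<epsilon> * (P * Q) > 0" using eps Pp Qp by simp
    have ueq: "sqrt 6 * sr
                  * (\<epsilon> * (cmod c4)^4 * real L ^ 3 * d\<^sup>2 * pi\<^sup>2 * (real Ne)\<^sup>2 * ((real Ne)\<^sup>2 - 1)) powr (-1/2)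
                  * (sr\<^sup>2 + (cmod c4)\<^sup>2 * real L * d * real Ne) powr (1/2) = sqrt (A / \<epsilon>)"
    proof -
      have "(\<epsilon> * (P * Q)) powr (-1/2) = 1 / sqrt (\<epsilon> * (P * Q))"
        using Xp by (simp add: powr_minus_divide powr_half_sqrt)
      moreover have "B powr (1/2) = sqrt B" using Bp by (simp add: powr_half_sqrt)
      moreover have "sqrt (A / \<epsilon>) = sqrt 6 * sr * sqrt B / sqrt (\<epsilon> * (P * Q))"
        unfolding A_def using assms eps by (simp add: real_sqrt_mult real_sqrt_divide field_simps)
      ultimately show ?thesis unfolding X B_def[symmetric] by simp
    qed
    have f: "CRB Ne L sr c4 d phi = of_real (A / (cos phi)\<^sup>2)" if ph: "phi \<in> {-pi/2<..<pi/2}" for phi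
    proof -
      have c: "cos phi > 0" using ph by (auto intro!: cos_gt_zero_pi)
      have "(6 * sr\<^sup>2 * (sr\<^sup>2 + (cmod c4)\<^sup>2 * real L * d * real Ne)) /
               ((cmod c4)^4 * real L ^ 3 * d\<^sup>2 * pi\<^sup>2 * (cos phi)\<^sup>2 * (real Ne)\<^sup>2 * ((real Ne)\<^sup>2 - 1))
           = 6 * sr\<^sup>2 * B / (P * (cos phi)\<^sup>2 * Q)"
        unfolding B_def P_def Q_def by (simp add: mult_ac)
      also have "\<dots> = A / (cos phi)\<^sup>2" unfolding A_def using c Pp Qp by (simp add: field_simps)
      finally have e: "(6 * sr\<^sup>2 * (sr\<^sup>2 + (cmod c4)\<^sup>2 * real L * d * real Ne)) /
               ((cmod c4)^4 * real L ^ 3 * d\<^sup>2 * pi\<^sup>2 * (cos phi)\<^sup>2 * (real Ne)\<^sup>2 * ((real Ne)\<^sup>2 - 1))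
           = A / (cos phi)\<^sup>2" .
      have "CRB Ne L sr c4 d phi = complex_of_real ((6 * sr\<^sup>2 * (sr\<^sup>2 + (cmod c4)\<^sup>2 * real L * d * real Ne)) /
               ((cmod c4)^4 * real L ^ 3 * d\<^sup>2 * pi\<^sup>2 * (cos phi)\<^sup>2 * (real Ne)\<^sup>2 * ((real Ne)\<^sup>2 - 1)))"
        using P1 ph by blast
      then show ?thesis unfolding e .
    qed
    show "let u = sqrt 6 * sr
                  * (\<epsilon> * (cmod c4)^4 * real L ^ 3 * d\<^sup>2 * pi\<^sup>2 * (real Ne)\<^sup>2 * ((real Ne)\<^sup>2 - 1)) powr (-1/2)
                  * (sr\<^sup>2 + (cmod c4)\<^sup>2 * real L * d * real Ne) powr (1/2)
              in measure (uniform_measure lborel {-pi/2<..<pi/2})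
                   {phi \<in> {-pi/2<..<pi/2}. Re (CRB Ne L sr c4 d phi) > \<epsilon>}
                 = (if u < 1 then 2 / pi * arcsin u else 1)"
      unfolding Let_def ueq by (rule prob_part[OF f Ap eps refl])
  qed
  show ?thesis using P1 P2 by blast
qed

end
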